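(* Let $r\in(0,\infty)$ and let $h:\mathbb{R}^n\to\mathbb{R}$ be a continuous function with compact support such that $\mathrm{supp}\,h\subset\mathbb{B}_r$, $h\ge 0$, and $\int h\,\mathrm{d}\lambda\le 1$. Let $g:\mathbb{R}^n\to\mathbb{R}$ be a continuous probability density function. Then for any $k\in(0,\infty)$ there exists a sequence $\{h_m^g\}_{m=1}^\infty\subset\mathcal{M}^g$ such that \[ \lim_{m\to\infty}\sup_{x\in\overline{\mathbb{B}}_r}\left|(g_k\star h)(x)-h_m^g(x)\right|=0 . \] Furthermore, if $g$ is moreover bounded and uniformly continuous, then \[ \lim_{m\to\infty}\sup_{x\in\mathbb{R}^n}\left|(g_k\star h)(x)-h_m^g(x)\right|=0 . \]
   Context: A probability density function (PDF) is a measurable $g\ge 0$ with $\int g\,\mathrm{d}\lambda=1$ ($\lambda$ Lebesgue measure). $\mathrm{supp}\,h=\{x: h(x)\ne0\}$. $\mathbb{B}_r$ and $\overline{\mathbb{B}}_r$ are the open and closed Euclidean balls of radius $r$ centered at $0$ in $\mathbb{R}^n$. For $k>0$, the dilate of $g$ is $g_k(x)=k^n g(kx)$, and $(g_k\star h)(x)=\int g_k(x-y)h(y)\,\mathrm{d}\lambda(y)$ is convolution. The class $\mathcal{M}^g=\bigcup_{m\in\mathbb{N}}\mathcal{M}^g_m$, where $\mathcal{M}^{g}_m=\{ \sum_{i=1}^{m}c_{i}\sigma_{i}^{-n}g((\cdot-\mu_{i})/\sigma_{i}) :\mu_{i}\in\mathbb{R}^{n},\ \sigma_{i}>0,\ c_i\ge0,\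 \sum_i c_i=1\}$ is the set of $m$-component location-scale finite mixtures of $g$. *)

theory Defs
  imports "HOL-Analysis.Analysis"
begin

definition is_pdf :: "('a::euclidean_space \<Rightarrow> real) \<Rightarrow> bool" where
  "is_pdf g \<longleftrightarrow> g \<in> borel_measurable lborel \<and> (\<forall>x. 0 \<le> g x) \<and>
     (\<integral>\<^sup>+ x. ennreal (g x) \<partial>lborel) = 1"

definition dilate :: "real \<Rightarrow> ('a::euclidean_space \<Rightarrow> real) \<Rightarrow> 'a \<Rightarrow> real" where
  "dilate k g x = k ^ DIM('a) * g (k *\<^sub>R x)"

definition conv :: "('a::euclidean_space \<Rightarrow> real) \<Rightarrow> ('a \<Rightarrow> real) \<Rightarrow> 'a \<Rightarrow> real" where
  "conv f h x = (\<integral> y. f (x - y) * h y \<partial>lborel)"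

definition mixtures_m :: "('a::euclidean_space \<Rightarrow> real) \<Rightarrow> nat \<Rightarrow> ('a \<Rightarrow> real) set" where
  "mixtures_m g m = {f. \<exists>c \<mu> \<sigma>. (\<forall>i<m. 0 \<le> c i \<and> 0 < \<sigma> i) \<and> (\<Sum>i<m. c i) = 1 \<and>
      f = (\<lambda>x. \<Sum>i<m. c i * \<sigma> i powr (- real DIM('a)) * g ((1 / \<sigma> i) *\<^sub>R (x - \<mu> i)))}"

definition mixtures :: "('a::euclidean_space \<Rightarrow> real) \<Rightarrow> ('a \<Rightarrow> real) set" where
  "mixtures g = (\<Union>m. mixtures_m g m)"

end

theory Submission imports Defs begin

lemma mix_finite:
  fixes g :: "'a::euclidean_space \<Rightarrow> real" and J :: "'b set"
  assumes "finite J" "\<forall>j\<in>J. 0 \<le> c j \<and> 0 < \<sigma> j" "sum c J = 1"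
  shows "(\<lambda>x. \<Sum>j\<in>J. c j * \<sigma> j powr (- real DIM('a)) * g ((1 / \<sigma> j) *\<^sub>R (x - \<mu> j))) \<in> mixtures g"
proof -
  obtain e where e: "bij_betw e {0..<card J} J" using ex_bij_betw_nat_finite[OF assms(1)] by blast
  have ee: "{..<card J} = {0..<card J}" by auto
  have "(\<lambda>x. \<Sum>j\<in>J. c j * \<sigma> j powr (- real DIM('a)) * g ((1 / \<sigma> j) *\<^sub>R (x - \<mu> j)))
    = (\<lambda>x. \<Sum>i<card J. (c \<circ> e) i * (\<sigma> \<circ> e) i powr (- real DIM('a)) * g ((1 / (\<sigma> \<circ> e) i) *\<^sub>R (x - (\<mu> \<circ> e) i)))"
    unfolding ee o_def by (rule ext, rule sum.reindex_bij_betw[OF e, symmetric])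
  moreover have "\<forall>i<card J. 0 \<le> (c \<circ> e) i \<and> 0 < (\<sigma> \<circ> e) i"
    using e assms(2) unfolding bij_betw_def by auto
  moreover have "(\<Sum>i<card J. (c \<circ> e) i) = 1"
    unfolding ee using sum.reindex_bij_betw[OF e, of c] assms(3) by (simp add: o_def)
  ultimately show ?thesis unfolding mixtures_def mixtures_m_def by blast
qed

lemma seq_from_eps:
  fixes F :: "'a \<Rightarrow> real" and T :: "'a set"
  assumes "T \<noteq> {}" "\<And>e. e > 0 \<Longrightarrow> \<exists>f\<in>M. \<forall>x\<in>T. \<bar>F x - f x\<bar> \<le> e"
  shows "\<exists>H. (\<forall>m. H m \<in> M) \<and> (\<lambda>m. SUP x\<in>T. ereal \<bar>F x - H m x\<bar>) \<longlonglongrightarrow> 0"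
proof -
  have "\<forall>m. \<exists>f\<in>M. \<forall>x\<in>T. \<bar>F x - f x\<bar> \<le> inverse (real (Suc m))"
    using assms(2) by simp
  then obtain H where H: "\<And>m. H m \<in> M" "\<And>m x. x \<in> T \<Longrightarrow> \<bar>F x - H m x\<bar> \<le> inverse (real (Suc m))"
    by metis
  have up: "(SUP x\<in>T. ereal \<bar>F x - H m x\<bar>) \<le> ereal (inverse (real (Suc m)))" for m
    using H(2) by (intro SUP_least) auto
  have lo: "0 \<le> (SUP x\<in>T. ereal \<bar>F x - H m x\<bar>)" for m
  proof -
    obtain x where "x \<in> T" using assms(1) by blast
    then have "ereal \<bar>F x - H m x\<bar> \<le> (SUP x\<in>T. ereal \<bar>F x - H m x\<bar>)" by (intro SUP_upper)
    then show ?thesis by (meson abs_ge_zero ereal_less_eq(5) order_trans)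
  qed
  have lim: "(\<lambda>m. ereal (inverse (real (Suc m)))) \<longlonglongrightarrow> ereal 0"
    by (rule lim_ereal[THEN iffD2, OF LIMSEQ_inverse_real_of_nat])
  have "(\<lambda>m. SUP x\<in>T. ereal \<bar>F x - H m x\<bar>) \<longlonglongrightarrow> 0"
    by (rule tendsto_sandwich[OF _ _ tendsto_const lim[unfolded zero_ereal_def[symmetric]]])
       (use up lo in \<open>auto simp: zero_ereal_def\<close>)
  then show ?thesis using H(1) by blast
qed

lemma core:
  fixes h g :: "'a::euclidean_space \<Rightarrow> real" and r k \<epsilon> :: real and T :: "'a set"
  assumes hc: "continuous_on UNIV h" and hK: "compact (closure {x. h x \<noteq> 0})"
    and hS: "{x. h x \<noteq> 0} \<subseteq> ball 0 r"
    and hpos: "\<forall>x. 0 \<le> h x" and hint: "(\<integral>\<^sup>+ x. ennreal (h x) \<partial>lborel) \<le> 1"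
    and gc: "continuous_on UNIV g" and k: "0 < k" and e: "\<epsilon> > 0"
    and UC: "\<And>e. e > 0 \<Longrightarrow> \<exists>\<delta>>0. \<forall>x\<in>T. \<forall>y\<in>{x. h x \<noteq> 0}. \<forall>y'. norm (y - y') < \<delta> \<longrightarrow>
              \<bar>dilate k g (x - y) - dilate k g (x - y')\<bar> \<le> e"
    and tail: "\<And>e. e > 0 \<Longrightarrow> \<exists>\<sigma>>0. \<forall>x\<in>T. \<bar>\<sigma> powr (- real DIM('a)) * g ((1/\<sigma>) *\<^sub>R (x - 0))\<bar> \<le> e"
  shows "\<exists>f\<in>mixtures g. \<forall>x\<in>T. \<bar>conv (dilate k g) h x - f x\<bar> \<le> \<epsilon>"
proof -
  define S where "S = {x. h x \<noteq> 0}"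
  define K where "K = closure S"
  define G where "G = dilate k g"
  have SK: "S \<subseteq> K" unfolding K_def by (rule closure_subset)
  have hK': "compact K" using hK unfolding K_def S_def .
  have hind: "h y = indicator K y *\<^sub>R h y" for y
    using SK unfolding S_def by (auto simp: indicator_def)
  have hI: "integrable lborel h"
  proof -
    have "integrable lborel (\<lambda>y. indicator K y *\<^sub>R h y)"
      by (rule borel_integrable_compact[OF hK' continuous_on_subset[OF hc]]) auto
    moreover have "(\<lambda>y. indicator K y *\<^sub>R h y) = h" using hind by (intro ext) simp
    ultimately show ?thesis by simp
  qed
  define I where "I = integral\<^sup>L lborel h"
  have I0: "0 \<le> I" unfolding I_def using hpos by simp
  have "ennreal I \<le> 1"
    using hint nn_integral_eq_integral[OF hI] hpos unfolding I_def by simp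
  then have I1: "I \<le> 1" by (simp add: ennreal_le_1)
  have Gc: "continuous_on UNIV G"
    unfolding G_def dilate_def[abs_def]
    by (auto intro!: continuous_intros continuous_on_compose2[OF gc])
  have Gm: "G \<in> borel_measurable borel" using Gc by (rule borel_measurable_continuous_onI)
  obtain \<delta> where \<delta>: "\<delta> > 0" and \<delta>P: "\<And>x y y'. x \<in> T \<Longrightarrow> y \<in> S \<Longrightarrow> norm (y - y') < \<delta> \<Longrightarrow>
      \<bar>G (x - y) - G (x - y')\<bar> \<le> \<epsilon>/2"
    using UC[of "\<epsilon>/2"] e unfolding S_def G_def by auto
  define d where "d = \<delta> / (real DIM('a) + 1)"
  have d: "d > 0" unfolding d_def using \<delta> by simp
  define q where "q y = (\<Sum>b\<in>Basis. (d * of_int \<lfloor>(y \<bullet> b) / d\<rfloor>) *\<^sub>R b)" for y :: 'a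
  have qclose: "norm (y - q y) < \<delta>" for y
  proof -
    have fl: "0 \<le> y \<bullet> b - d * of_int \<lfloor>(y \<bullet> b) / d\<rfloor> \<and> y \<bullet> b - d * of_int \<lfloor>(y \<bullet> b) / d\<rfloor> \<le> d" for b
    proof -
      have a: "of_int \<lfloor>(y \<bullet> b) / d\<rfloor> \<le> (y \<bullet> b) / d" "(y \<bullet> b) / d < of_int \<lfloor>(y \<bullet> b) / d\<rfloor> + 1"
        by linarith+
      have "d * of_int \<lfloor>(y \<bullet> b) / d\<rfloor> \<le> y \<bullet> b" using mult_left_mono[OF a(1), of d] d by simp
      moreover have "y \<bullet> b < d * (of_int \<lfloor>(y \<bullet> b) / d\<rfloor> + 1)" using mult_strict_left_mono[OF a(2) d] d by simp
      ultimately show ?thesis by (simp add: algebra_simps)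
    qed
    have "y - q y = (\<Sum>b\<in>Basis. (y \<bullet> b - d * of_int \<lfloor>(y \<bullet> b) / d\<rfloor>) *\<^sub>R b)"
      unfolding q_def by (subst (1) euclidean_representation[symmetric, of y])
        (simp add: sum_subtractf[symmetric] scaleR_diff_left)
    also have "norm \<dots> \<le> (\<Sum>b\<in>Basis. norm ((y \<bullet> b - d * of_int \<lfloor>(y \<bullet> b) / d\<rfloor>) *\<^sub>R b))"
      by (rule norm_sum)
    also have "\<dots> \<le> (\<Sum>b\<in>(Basis::'a set). d)"
      by (rule sum_mono) (use fl in auto)
    also have "\<dots> = real DIM('a) * d" by simp
    also have "\<dots> < \<delta>" unfolding d_def using \<delta> by (simp add: field_simps)
    finally show ?thesis .
  qed
  have qm: "q \<in> borel_measurable lborel"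
    unfolding q_def by measurable
  define V where "V = q ` S"
  have finV: "finite V"
  proof -
    define N where "N = \<lceil>r / d\<rceil>"
    define Q where "Q z = (\<Sum>b\<in>Basis. (d * of_int (z b)) *\<^sub>R b)" for z :: "'a \<Rightarrow> int"
    have "V \<subseteq> Q ` (PiE Basis (\<lambda>_. {-N..N}))"
    proof
      fix v assume "v \<in> V"
      then obtain y where y: "y \<in> S" "v = q y" unfolding V_def by auto
      have ny: "norm y < r" using y(1) hS unfolding S_def by auto
      have "restrict (\<lambda>b. \<lfloor>(y \<bullet> b) / d\<rfloor>) Basis \<in> PiE Basis (\<lambda>_. {-N..N})"
      proof (rule restrict_PiE_iff[THEN iffD2], intro ballI)
        fix b :: 'a assume b: "b \<in> Basis"
        have "\<bar>y \<bullet> b\<bar> < r" using Basis_le_norm[OF b, of y] ny by linarith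
        then have t: "- (r / d) < (y \<bullet> b) / d" "(y \<bullet> b) / d < r / d"
          using d by (auto simp: field_simps abs_less_iff)
        have c1: "r / d \<le> of_int N" unfolding N_def by (rule le_of_int_ceiling)
        have c2: "of_int \<lfloor>(y \<bullet> b) / d\<rfloor> \<le> (y \<bullet> b) / d" by (rule of_int_floor_le)
        have "real_of_int \<lfloor>(y \<bullet> b) / d\<rfloor> \<le> real_of_int N" using c1 c2 t by linarith
        then have "\<lfloor>(y \<bullet> b) / d\<rfloor> \<le> N" by (simp only: of_int_le_iff)
        moreover have "real_of_int (- N) \<le> (y \<bullet> b) / d" using c1 t by simp
        then have "- N \<le> \<lfloor>(y \<bullet> b) / d\<rfloor>" by (simp only: le_floor_iff)
        ultimately show "\<lfloor>(y \<bullet> b) / d\<rfloor> \<in> {-N..N}" by simp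
      qed
      moreover have "v = Q (restrict (\<lambda>b. \<lfloor>(y \<bullet> b) / d\<rfloor>) Basis)"
        unfolding y(2) q_def Q_def by (intro sum.cong) auto
      ultimately show "v \<in> Q ` (PiE Basis (\<lambda>_. {-N..N}))" by blast
    qed
    moreover have "finite (PiE (Basis::'a set) (\<lambda>_. {-N..N}))" by (rule finite_PiE) auto
    ultimately show ?thesis using finite_subset by blast
  qed
  define w where "w v = (\<integral>y. indicator (q -` {v}) y * h y \<partial>lborel)" for v
  have qsets: "q -` {v} \<in> sets lborel" for v
    using measurable_sets[OF qm, of "{v}"] by simp
  have wI: "integrable lborel (\<lambda>y. indicator (q -` {v}) y * h y)" for v
    using integrable_mult_indicator[OF qsets hI] by simp
  have w0: "0 \<le> w v" for v unfolding w_def using hpos by (simp add: indicator_def)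
  have decomp: "F (q y) * h y = (\<Sum>v\<in>V. F v * (indicator (q -` {v}) y * h y))" for F y
  proof (cases "h y = 0")
    case True then show ?thesis by simp
  next
    case False
    then have "q y \<in> V" unfolding V_def S_def by auto
    have "(\<Sum>v\<in>V. F v * (indicator (q -` {v}) y * h y)) = (\<Sum>v\<in>V. if v = q y then F (q y) * h y else 0)"
      by (rule sum.cong) (auto simp: indicator_def)
    also have "\<dots> = F (q y) * h y" using finV \<open>q y \<in> V\<close> by (subst sum.delta) auto
    finally show ?thesis by simp
  qed
  have sumw: "(\<Sum>v\<in>V. w v) = I"
  proof -
    have "I = (\<integral>y. (\<Sum>v\<in>V. 1 * (indicator (q -` {v}) y * h y)) \<partial>lborel)"
      unfolding I_def using decomp[of "\<lambda>_. 1"] by simp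
    also have "\<dots> = (\<Sum>v\<in>V. w v)" unfolding w_def mult_1
      by (rule Bochner_Integration.integral_sum) (use wI in auto)
    finally show ?thesis by simp
  qed
  have Aeq: "(\<integral>y. G (x - q y) * h y \<partial>lborel) = (\<Sum>v\<in>V. G (x - v) * w v)"
       and Aint: "integrable lborel (\<lambda>y. G (x - q y) * h y)" for x
  proof -
    have e1: "(\<lambda>y. G (x - q y) * h y) = (\<lambda>y. \<Sum>v\<in>V. G (x - v) * (indicator (q -` {v}) y * h y))"
      using decomp[of "\<lambda>v. G (x - v)"] by auto
    show "(\<integral>y. G (x - q y) * h y \<partial>lborel) = (\<Sum>v\<in>V. G (x - v) * w v)"
      unfolding e1 w_def by (subst Bochner_Integration.integral_sum) (use wI in auto)
    show "integrable lborel (\<lambda>y. G (x - q y) * h y)"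
      unfolding e1 by (intro Bochner_Integration.integrable_sum integrable_mult_right wI)
  qed
  have Cint: "integrable lborel (\<lambda>y. G (x - y) * h y)" for x
  proof -
    have "integrable lborel (\<lambda>y. indicator K y *\<^sub>R (G (x - y) * h y))"
      by (rule borel_integrable_compact[OF hK'])
         (auto intro!: continuous_intros continuous_on_subset[OF hc] continuous_on_compose2[OF Gc])
    moreover have "(\<lambda>y. indicator K y *\<^sub>R (G (x - y) * h y)) = (\<lambda>y. G (x - y) * h y)"
      using hind by (intro ext) (metis mult.left_commute real_scaleR_def)
    ultimately show ?thesis by simp
  qed
  have Aest: "\<bar>conv G h x - (\<Sum>v\<in>V. G (x - v) * w v)\<bar> \<le> \<epsilon>/2 * I" if x: "x \<in> T" for x
  proof -
    have "conv G h x - (\<Sum>v\<in>V. G (x - v) * w v) = (\<integral>y. G (x - y) * h y - G (x - q y) * h y \<partial>lborel)"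
      unfolding conv_def Aeq[symmetric] by (rule Bochner_Integration.integral_diff[symmetric, OF Cint Aint])
    also have "\<bar>\<dots>\<bar> \<le> (\<integral>y. \<bar>G (x - y) * h y - G (x - q y) * h y\<bar> \<partial>lborel)"
      by (rule integral_abs_bound)
    also have "\<dots> \<le> (\<integral>y. \<epsilon>/2 * h y \<partial>lborel)"
    proof (rule integral_mono)
      show "integrable lborel (\<lambda>y. \<bar>G (x - y) * h y - G (x - q y) * h y\<bar>)"
        by (intro integrable_abs Bochner_Integration.integrable_diff Cint Aint)
      show "integrable lborel (\<lambda>y. \<epsilon>/2 * h y)" by (intro integrable_mult_right hI)
      fix y
      show "\<bar>G (x - y) * h y - G (x - q y) * h y\<bar> \<le> \<epsilon>/2 * h y"
      proof (cases "h y = 0")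
        case True then show ?thesis by simp
      next
        case False
        then have "y \<in> S" unfolding S_def by simp
        then have "\<bar>G (x - y) - G (x - q y)\<bar> \<le> \<epsilon>/2" using \<delta>P[OF x _ qclose] by blast
        moreover have "\<bar>G (x - y) * h y - G (x - q y) * h y\<bar> = \<bar>G (x - y) - G (x - q y)\<bar> * h y"
          using hpos by (simp add: left_diff_distrib[symmetric] abs_mult)
        moreover have "\<bar>G (x - y) - G (x - q y)\<bar> * h y \<le> \<epsilon>/2 * h y"
          using calculation(1) hpos by (intro mult_right_mono) auto
        ultimately show ?thesis by linarith
      qed
    qed
    also have "\<dots> = \<epsilon>/2 * I" unfolding I_def by simp
    finally show ?thesis .
  qed
  obtain \<sigma> where \<sigma>: "\<sigma> > 0" and \<sigma>P: "\<And>x. x \<in> T \<Longrightarrow>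
      \<bar>\<sigma> powr (- real DIM('a)) * g ((1/\<sigma>) *\<^sub>R (x - 0))\<bar> \<le> \<epsilon>/2"
    using tail[of "\<epsilon>/2"] e by auto
  define J where "J = insert None (Some ` V)"
  define c where "c j = (case j of None \<Rightarrow> 1 - I | Some (v::'a) \<Rightarrow> w v)" for j
  define s where "s j = (case j of None \<Rightarrow> \<sigma> | Some (v::'a) \<Rightarrow> 1 / k)" for j
  define \<mu> where "\<mu> j = (case j of None \<Rightarrow> 0 | Some (v::'a) \<Rightarrow> v)" for j
  define f where "f = (\<lambda>x. \<Sum>j\<in>J. c j * s j powr (- real DIM('a)) * g ((1 / s j) *\<^sub>R (x - \<mu> j)))"
  have finJ: "finite J" unfolding J_def using finV by simp
  have sumJ: "(\<Sum>j\<in>J. F j) = F None + (\<Sum>v\<in>V. F (Some v))" for F :: "'a option \<Rightarrow> real"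
    unfolding J_def using finV by (simp add: sum.reindex)
  have "f \<in> mixtures g" unfolding f_def
  proof (rule mix_finite[OF finJ])
    show "\<forall>j\<in>J. 0 \<le> c j \<and> 0 < s j" unfolding J_def c_def s_def using I1 w0 \<sigma> k by auto
    show "sum c J = 1" unfolding sumJ c_def using sumw by simp
  qed
  moreover have "\<bar>conv (dilate k g) h x - f x\<bar> \<le> \<epsilon>" if x: "x \<in> T" for x
  proof -
    have pk: "(1 / k) powr (- real DIM('a)) = k ^ DIM('a)"
      using k by (simp add: powr_minus powr_realpow power_one_over)
    have fx: "f x = (1 - I) * (\<sigma> powr (- real DIM('a)) * g ((1/\<sigma>) *\<^sub>R (x - 0))) + (\<Sum>v\<in>V. G (x - v) * w v)"
      unfolding f_def sumJ c_def s_def \<mu>_def G_def dilate_def using k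
      by (simp add: pk algebra_simps scaleR_diff_right)
    have "\<bar>(1 - I) * (\<sigma> powr (- real DIM('a)) * g ((1/\<sigma>) *\<^sub>R (x - 0)))\<bar> \<le> (1 - I) * (\<epsilon>/2)"
    proof -
      have "\<bar>(1 - I) * (\<sigma> powr (- real DIM('a)) * g ((1/\<sigma>) *\<^sub>R (x - 0)))\<bar>
          = (1 - I) * \<bar>\<sigma> powr (- real DIM('a)) * g ((1/\<sigma>) *\<^sub>R (x - 0))\<bar>"
        using I1 by (simp add: abs_mult)
      also have "\<dots> \<le> (1 - I) * (\<epsilon>/2)" using \<sigma>P[OF x] I1 by (intro mult_left_mono) auto
      finally show ?thesis .
    qed
    moreover have "\<epsilon>/2 * I + (1 - I) * (\<epsilon>/2) = \<epsilon>/2" by (simp add: field_simps)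
    ultimately show ?thesis using Aest[OF x] fx e unfolding G_def by linarith
  qed
  ultimately show ?thesis by blast
qed

lemma tail_lemma:
  fixes g :: "'a::euclidean_space \<Rightarrow> real" and T :: "'a set"
  assumes M: "M > 0" and B: "\<And>x \<sigma>. x \<in> T \<Longrightarrow> \<sigma> \<ge> 1 \<Longrightarrow> \<bar>g ((1/\<sigma>) *\<^sub>R x)\<bar> \<le> M"
    and e: "e > 0"
  shows "\<exists>\<sigma>>0. \<forall>x\<in>T. \<bar>\<sigma> powr (- real DIM('a)) * g ((1/\<sigma>) *\<^sub>R (x - 0))\<bar> \<le> e"
proof (intro exI[of _ "max 1 (M/e)"] conjI ballI)
  define \<sigma> where "\<sigma> = max 1 (M/e)"
  have s1: "\<sigma> \<ge> 1" unfolding \<sigma>_def by simp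
  have "M / e \<le> \<sigma>" unfolding \<sigma>_def by simp
  then have s2: "M \<le> e * \<sigma>" using e by (simp add: pos_divide_le_eq mult.commute)
  show "max 1 (M/e) > 0" by simp
  fix x assume x: "x \<in> T"
  have p: "\<sigma> powr (- real DIM('a)) \<le> \<sigma> powr (-1)"
    by (rule powr_mono) (use s1 DIM_positive[where 'a='a] in auto)
  have "\<bar>\<sigma> powr (- real DIM('a)) * g ((1/\<sigma>) *\<^sub>R (x - 0))\<bar> = \<sigma> powr (- real DIM('a)) * \<bar>g ((1/\<sigma>) *\<^sub>R x)\<bar>"
    by (simp add: abs_mult)
  also have "\<dots> \<le> \<sigma> powr (-1) * M"
    by (intro mult_mono p B[OF x s1]) auto
  also have "\<dots> = M / \<sigma>" using s1 by (simp add: powr_minus_divide)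
  also have "\<dots> \<le> e" using s1 s2 by (simp add: field_simps)
  finally show "\<bar>(max 1 (M/e)) powr (- real DIM('a)) * g ((1/(max 1 (M/e))) *\<^sub>R (x - 0))\<bar> \<le> e"
    unfolding \<sigma>_def .
qed

theorem lemma4:
  fixes h g :: "'a::euclidean_space \<Rightarrow> real" and r k :: real
  assumes "0 < r"
    and "continuous_on UNIV h"
    and "compact (closure {x. h x \<noteq> 0})"
    and "{x. h x \<noteq> 0} \<subseteq> ball 0 r"
    and "\<forall>x. 0 \<le> h x"
    and "(\<integral>\<^sup>+ x. ennreal (h x) \<partial>lborel) \<le> 1"
    and "continuous_on UNIV g"
    and "is_pdf g"
    and "0 < k"
  shows "(\<exists>H :: nat \<Rightarrow> 'a \<Rightarrow> real. (\<forall>m. H m \<in> mixtures g) \<and>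
            (\<lambda>m. SUP x\<in>cball 0 r. ereal \<bar>conv (dilate k g) h x - H m x\<bar>) \<longlonglongrightarrow> 0)
       \<and> (bounded (range g) \<and> uniformly_continuous_on UNIV g \<longrightarrow>
          (\<exists>H :: nat \<Rightarrow> 'a \<Rightarrow> real. (\<forall>m. H m \<in> mixtures g) \<and>
            (\<lambda>m. SUP x. ereal \<bar>conv (dilate k g) h x - H m x\<bar>) \<longlonglongrightarrow> 0))"
proof (intro conjI impI)
  note core' = core[OF assms(2-7,9)]
  define G where "G = dilate k g"
  have Gc: "continuous_on UNIV G"
    unfolding G_def dilate_def[abs_def]
    by (auto intro!: continuous_intros continuous_on_compose2[OF assms(7)])
  show "\<exists>H :: nat \<Rightarrow> 'a \<Rightarrow> real. (\<forall>m. H m \<in> mixtures g) \<and>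
            (\<lambda>m. SUP x\<in>cball 0 r. ereal \<bar>conv (dilate k g) h x - H m x\<bar>) \<longlonglongrightarrow> 0"
  proof (rule seq_from_eps)
    show "cball 0 r \<noteq> {}" using assms(1) by simp
    fix \<epsilon> :: real assume e: "\<epsilon> > 0"
    show "\<exists>f\<in>mixtures g. \<forall>x\<in>cball 0 r. \<bar>conv (dilate k g) h x - f x\<bar> \<le> \<epsilon>"
    proof (rule core[OF assms(2-7,9) e])
      fix e :: real assume e: "e > 0"
      define C where "C = cball (0::'a) (2*r+1)"
      have "uniformly_continuous_on C G"
        by (rule compact_uniformly_continuous[OF continuous_on_subset[OF Gc]]) (auto simp: C_def)
      then obtain \<delta>0 where \<delta>0: "\<delta>0 > 0" and \<delta>0P: "\<And>z z'. z \<in> C \<Longrightarrow> z' \<in> C \<Longrightarrow> dist z' z < \<delta>0 \<Longrightarrow> dist (G z') (G z) < e"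
        unfolding uniformly_continuous_on_def using e by metis
      show "\<exists>\<delta>>0. \<forall>x\<in>cball 0 r. \<forall>y\<in>{x. h x \<noteq> 0}. \<forall>y'. norm (y - y') < \<delta> \<longrightarrow>
              \<bar>dilate k g (x - y) - dilate k g (x - y')\<bar> \<le> e"
      proof (intro exI[of _ "min 1 \<delta>0"] conjI ballI allI impI)
        show "min 1 \<delta>0 > 0" using \<delta>0 by simp
        fix x y y' :: 'a assume x: "x \<in> cball 0 r" and y: "y \<in> {x. h x \<noteq> 0}" and yy: "norm (y - y') < min 1 \<delta>0"
        have nx: "norm x \<le> r" using x by simp
        have ny: "norm y < r" using y assms(4) by auto
        have "norm (x - y) \<le> norm x + norm y" by (rule norm_triangle_ineq4)
        then have c1: "x - y \<in> C" unfolding C_def using nx ny by simp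
        have "norm (x - y') \<le> norm (x - y) + norm (y - y')"
          using norm_triangle_ineq[of "x - y" "y - y'"] by simp
        then have c2: "x - y' \<in> C" unfolding C_def using nx ny yy \<open>norm (x - y) \<le> norm x + norm y\<close> by simp
        have "dist (x - y') (x - y) = norm (y - y')" by (simp add: dist_norm norm_minus_commute)
        then have "dist (G (x - y')) (G (x - y)) < e" using \<delta>0P[OF c1 c2] yy by simp
        then show "\<bar>dilate k g (x - y) - dilate k g (x - y')\<bar> \<le> e"
          unfolding G_def by (simp add: dist_real_def abs_minus_commute)
      qed
    next
      fix e :: real assume e: "e > 0"
      have "compact (g ` cball 0 r)"
        by (rule compact_continuous_image[OF continuous_on_subset[OF assms(7)]]) auto
      then obtain M where M: "M > 0" "\<And>z. z \<in> cball 0 r \<Longrightarrow> norm (g z) \<le> M"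
        using compact_imp_bounded bounded_pos by (metis imageI)
      show "\<exists>\<sigma>>0. \<forall>x\<in>cball 0 r. \<bar>\<sigma> powr (- real DIM('a)) * g ((1/\<sigma>) *\<^sub>R (x - 0))\<bar> \<le> e"
      proof (rule tail_lemma[OF M(1) _ e])
        fix x :: 'a and \<sigma> :: real assume x: "x \<in> cball 0 r" and s: "\<sigma> \<ge> 1"
        have "norm ((1/\<sigma>) *\<^sub>R x) \<le> norm x" using s
          by (simp add: divide_le_eq mult_le_cancel_left1)
        then show "\<bar>g ((1/\<sigma>) *\<^sub>R x)\<bar> \<le> M" using M(2)[of "(1/\<sigma>) *\<^sub>R x"] x by simp
      qed
    qed
  qed
next
  assume gb: "bounded (range g) \<and> uniformly_continuous_on UNIV g"
  show "\<exists>H :: nat \<Rightarrow> 'a \<Rightarrow> real. (\<forall>m. H m \<in> mixtures g) \<and>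
            (\<lambda>m. SUP x. ereal \<bar>conv (dilate k g) h x - H m x\<bar>) \<longlonglongrightarrow> 0"
  proof (rule seq_from_eps)
    show "UNIV \<noteq> {}" by simp
    fix \<epsilon> :: real assume e: "\<epsilon> > 0"
    show "\<exists>f\<in>mixtures g. \<forall>x\<in>UNIV. \<bar>conv (dilate k g) h x - f x\<bar> \<le> \<epsilon>"
    proof (rule core[OF assms(2-7,9) e])
      fix e :: real assume e: "e > 0"
      have kn: "k ^ DIM('a) > 0" using assms(9) by simp
      obtain \<delta>0 where \<delta>0: "\<delta>0 > 0" and \<delta>0P: "\<And>z z'. dist z' z < \<delta>0 \<Longrightarrow> dist (g z') (g z) < e / k ^ DIM('a)"
        using gb e kn unfolding uniformly_continuous_on_def
        by (metis UNIV_I divide_pos_pos)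
      show "\<exists>\<delta>>0. \<forall>x\<in>UNIV. \<forall>y\<in>{x. h x \<noteq> 0}. \<forall>y'. norm (y - y') < \<delta> \<longrightarrow>
              \<bar>dilate k g (x - y) - dilate k g (x - y')\<bar> \<le> e"
      proof (intro exI[of _ "\<delta>0 / k"] conjI ballI allI impI)
        show "\<delta>0 / k > 0" using \<delta>0 assms(9) by simp
        fix x y y' :: 'a assume yy: "norm (y - y') < \<delta>0 / k"
        have "dist (k *\<^sub>R (x - y')) (k *\<^sub>R (x - y)) = k * norm (y - y')"
          using assms(9) by (simp add: dist_norm norm_minus_commute scaleR_diff_right[symmetric])
        also have "\<dots> < \<delta>0" using yy assms(9) by (simp add: field_simps)
        finally have "\<bar>g (k *\<^sub>R (x - y')) - g (k *\<^sub>R (x - y))\<bar> < e / k ^ DIM('a)"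
          using \<delta>0P by (simp add: dist_real_def)
        then have "k ^ DIM('a) * \<bar>g (k *\<^sub>R (x - y)) - g (k *\<^sub>R (x - y'))\<bar> < e"
          using kn by (simp add: field_simps abs_minus_commute)
        then show "\<bar>dilate k g (x - y) - dilate k g (x - y')\<bar> \<le> e"
          unfolding dilate_def using kn by (simp add: abs_mult right_diff_distrib[symmetric])
      qed
    next
      fix e :: real assume e: "e > 0"
      obtain M where M: "M > 0" "\<And>z. norm (g z) \<le> M"
        using gb bounded_pos by (metis rangeI)
      show "\<exists>\<sigma>>0. \<forall>x\<in>UNIV. \<bar>\<sigma> powr (- real DIM('a)) * g ((1/\<sigma>) *\<^sub>R (x - 0))\<bar> \<le> e"
        by (rule tail_lemma[OF M(1) _ e]) (use M(2) in auto)
    qed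
  qed
qed
end
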